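(* Let $1<a<b$ be coprime integers and let $D\subseteq G$ be a subdiagram. Then \[ Q(\mathbf{1}_D)=\mathtt{dinv}(D), \] where $\mathbf{1}_D\in\mathbb{R}^G$ is the indicator vector of $D$ (its $i$-th coordinate is $1$ if $i\in D$ and $0$ otherwise). Moreover, if $D\neq\varnothing$ then $Q(\mathbf{1}_D)>0$.
   Context: Fix coprime integers $1<a<b$. Work in the grid $\mathbb{Z}^2$, with $+x$ pointing east and $+y$ pointing north; elements of $\mathbb{Z}^2$ are called cells. Let $g:\mathbb{Z}^2\to\mathbb{Z}$, $g(x,y)=ab-ax-by$ (the value of the cell). For a cell $c=(x,y)$ and an integer $k$, write $c-ka:=(x+k,y)$ (the cell $k$ steps east) and $c-kb:=(x,y+k)$ (the cell $k$ steps north); thus $g(c-ka)=g(c)-ka$ and $g(c-kb)=g(c)-kb$. Let $G=\{(x,y)\in\mathbb{Z}_{\ge1}^2: g(x,y)>0\}$ ($g$ is injective on $G$). A subdiagram is a subset $D\subseteq G$ such that whenever $(x,y)\in D$, $(x',y')\in G$, $x'\le x$ and $y'\le y$, we have $(x',y')\in D$ (equivalently, $D$ is upward closed for the partial order $i\preceq j \iff g(j)-g(i)\in\{ma+nb: m,n\in\mathbb{Z}_{\ge0}\}$). Define $K:\mathbb{Z}\to\mathbb{Z}$ by $K(d)=\mathbf{1}_{d\ge0}-\mathbf{1}_{d\ge a}-\mathbf{1}_{d\ge b}+\mathbf{1}_{d\ge a+b}$ (equivalently $K(d)=\mathbf{1}_{0\le d<a}-\mathbf{1}_{b\le d<a+b}$),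 and the quadratic form on $\mathbb{R}^G$ \[ Q(\mathbf{n})=\sum_{i,j\in G}K\big(g(j)-g(i)\big)\,n_in_j,\qquad \mathbf{n}=(n_i)_{i\in G}. \] For a subdiagram $D$ and $c\in D$, let $\mathrm{arm}_D(c)=\max\{k\ge0: c-ka\in D\}$ and $\mathrm{leg}_D(c)=\max\{k\ge 0: c-kb\in D\}$. Define \[ \mathtt{dinv}(D)=\#\Big\{c\in D:\ \frac{\mathrm{leg}_D(c)}{\mathrm{arm}_D(c)+1}<\frac ab<\frac{\mathrm{leg}_D(c)+1}{\mathrm{arm}_D(c)}\Big\}, \] with the convention that $\frac{\mathrm{leg}_D(c)+1}{0}=+\infty$. *)

theory Defs
  imports "HOL-Analysis.Analysis"
begin

type_synonym cell = "int \<times> int"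

definition gval :: "int \<Rightarrow> int \<Rightarrow> cell \<Rightarrow> int" where
  "gval a b c = a * b - a * fst c - b * snd c"

definition Gset :: "int \<Rightarrow> int \<Rightarrow> cell set" where
  "Gset a b = {(x, y). x \<ge> 1 \<and> y \<ge> 1 \<and> gval a b (x, y) > 0}"

definition subdiagram :: "int \<Rightarrow> int \<Rightarrow> cell set \<Rightarrow> bool" where
  "subdiagram a b D \<longleftrightarrow> D \<subseteq> Gset a b \<and>
     (\<forall>x y x' y'. (x, y) \<in> D \<longrightarrow> (x', y') \<in> Gset a b \<longrightarrow> x' \<le> x \<longrightarrow> y' \<le> y \<longrightarrow> (x', y') \<in> D)"

definition Kfun :: "int \<Rightarrow> int \<Rightarrow> int \<Rightarrow> int" where
  "Kfun a b d = (if d \<ge> 0 then 1 else 0) - (if d \<ge> a then 1 else 0)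
                 - (if d \<ge> b then 1 else 0) + (if d \<ge> a + b then 1 else 0)"

definition Qform :: "int \<Rightarrow> int \<Rightarrow> (cell \<Rightarrow> real) \<Rightarrow> real" where
  "Qform a b n = (\<Sum>i\<in>Gset a b. \<Sum>j\<in>Gset a b.
       real_of_int (Kfun a b (gval a b j - gval a b i)) * n i * n j)"

(* c - k a = k steps east, c - k b = k steps north *)
definition arm :: "cell set \<Rightarrow> cell \<Rightarrow> nat" where
  "arm D c = Max {k::nat. (fst c + int k, snd c) \<in> D}"

definition leg :: "cell set \<Rightarrow> cell \<Rightarrow> nat" where
  "leg D c = Max {k::nat. (fst c, snd c + int k) \<in> D}"

definition dinv :: "int \<Rightarrow> int \<Rightarrow> cell set \<Rightarrow> nat" where
  "dinv a b D = card {c \<in> D.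
      real (leg D c) / real (arm D c + 1) < real_of_int a / real_of_int b \<and>
      (arm D c = 0 \<or> real_of_int a / real_of_int b < real (leg D c + 1) / real (arm D c))}"

end

theory Submission
  imports Defs
begin

definition Hs :: "int \<Rightarrow> int" where "Hs d = (if 0 \<le> d then 1 else 0)"

lemma K_H: "Kfun a b d = Hs d - Hs (d - a) - Hs (d - b) + Hs (d - a - b)"
  unfolding Kfun_def Hs_def by auto

lemma sumK_up: "(\<Sum>u\<le>m. Kfun a b (d0 + a * int u)) =
   Hs (d0 + a * int m) - Hs (d0 - a) - Hs (d0 + a * int m - b) + Hs (d0 - a - b)"
proof (induction m)
  case 0 then show ?case by (simp add: K_H)
next
  case (Suc m)
  have e: "d0 + a * int (Suc m) - a = d0 + a * int m" "d0 + a * int (Suc m) - a - b = d0 + a * int m - b"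
    by (simp_all add: algebra_simps)
  have k: "Kfun a b (d0 + a * int (Suc m)) = Hs (d0 + a * int (Suc m)) - Hs (d0 + a * int m) - Hs (d0 + a * int (Suc m) - b) + Hs (d0 + a * int m - b)"
    by (simp add: K_H algebra_simps)
  show ?case by (simp only: sum.atMost_Suc Suc.IH k, simp?)
qed

lemma sumK_down: "(\<Sum>u\<le>m. Kfun a b (d0 - a * int u)) =
   Hs d0 - Hs (d0 - a * (int m + 1)) - Hs (d0 - b) + Hs (d0 - b - a * (int m + 1))"
proof (induction m)
  case 0 then show ?case by (simp add: K_H algebra_simps)
next
  case (Suc m)
  have e: "d0 - a * int (Suc m) - a = d0 - a * (int (Suc m) + 1)"
    "d0 - a * int (Suc m) - b = d0 - b - a * (int m + 1)"
    "d0 - a * int (Suc m) - a - b = d0 - b - a * (int (Suc m) + 1)"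
    "d0 - a * int (Suc m) = d0 - a * (int m + 1)"
    by (simp_all add: algebra_simps)
  have k: "Kfun a b (d0 - a * int (Suc m)) = Hs (d0 - a * (int m + 1)) - Hs (d0 - a * (int (Suc m) + 1)) - Hs (d0 - b - a * (int m + 1)) + Hs (d0 - b - a * (int (Suc m) + 1))"
    by (simp add: K_H algebra_simps)
  show ?case by (simp only: sum.atMost_Suc Suc.IH k, simp?)
qed

lemma inner_sum:
  assumes "0 < a" "0 < b"
  shows "(\<Sum>u\<le>m. Kfun a b (a*int u - b*int t) + (if 0 < t then Kfun a b (b*int t - a*int u) else 0))
     = Hs (a*int m - b*int t) - Hs (a*int m - b*int t - b)
       + (if 0 < t then Hs (b*int t - b - a*(int m + 1)) - Hs (b*int t - a*(int m + 1)) else 0)"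
proof -
  have s1: "(\<Sum>u\<le>m. Kfun a b (a*int u - b*int t)) = Hs (a*int m - b*int t) - Hs (a*int m - b*int t - b)"
  proof -
    have "(\<Sum>u\<le>m. Kfun a b (a*int u - b*int t)) = (\<Sum>u\<le>m. Kfun a b (- b*int t + a*int u))"
      by (simp add: algebra_simps)
    also have "\<dots> = Hs (- b*int t + a * int m) - Hs (- b*int t - a) - Hs (- b*int t + a * int m - b) + Hs (- b*int t - a - b)"
      by (rule sumK_up)
    also have "Hs (- b*int t - a) = 0" 
      using assms by (auto simp: Hs_def) (smt (verit) mult_nonneg_nonneg of_nat_0_le_iff)
    also have "Hs (- b*int t - a - b) = 0"
      using assms by (auto simp: Hs_def) (smt (verit) mult_nonneg_nonneg of_nat_0_le_iff)
    finally show ?thesis by (simp add: algebra_simps)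
  qed
  have s2: "0 < t \<Longrightarrow> (\<Sum>u\<le>m. Kfun a b (b*int t - a*int u)) = Hs (b*int t - b - a*(int m + 1)) - Hs (b*int t - a*(int m + 1))"
  proof -
    assume t: "0 < t"
    have "(\<Sum>u\<le>m. Kfun a b (b*int t - a*int u)) = Hs (b*int t) - Hs (b*int t - a * (int m + 1)) - Hs (b*int t - b) + Hs (b*int t - b - a * (int m + 1))"
      by (rule sumK_down)
    moreover have "Hs (b*int t) = 1" using assms by (simp add: Hs_def)
    moreover have "Hs (b*int t - b) = 1" using assms t
      by (simp add: Hs_def)
    ultimately show ?thesis by simp
  qed
  show ?thesis
  proof (cases "0 < t")
    case True then show ?thesis by (simp add: sum.distrib s1 s2)
  next
    case False then show ?thesis using s1 by simp
  qed
qed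

lemma outer_sum:
  assumes "0 < a" "0 < b"
  shows "(\<Sum>t\<le>l. Hs (a*int m - b*int t) - Hs (a*int m - b*int t - b)
       + (if 0 < t then Hs (b*int t - b - a*(int m + 1)) - Hs (b*int t - a*(int m + 1)) else 0))
     = 1 - Hs (a*int m - b*(int l + 1)) - Hs (b * int l - a*(int m + 1))"
proof (induction l)
  case 0
  have "Hs (- (a*(int m + 1))) = 0" using assms by (simp add: Hs_def) (smt (verit) mult_pos_pos of_nat_0_le_iff)
  then show ?case using assms by (simp add: Hs_def)
next
  case (Suc l)
  have k: "Hs (a*int m - b*int (Suc l)) - Hs (a*int m - b*int (Suc l) - b)
       + (if 0 < Suc l then Hs (b*int (Suc l) - b - a*(int m + 1)) - Hs (b*int (Suc l) - a*(int m + 1)) else 0)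
      = Hs (a*int m - b*(int l + 1)) - Hs (a*int m - b*(int (Suc l) + 1)) + Hs (b * int l - a*(int m + 1)) - Hs (b * int (Suc l) - a*(int m + 1))"
    by (simp add: algebra_simps)
  show ?case by (simp only: sum.atMost_Suc Suc.IH k, simp?)
qed

lemma Phi:
  assumes "0 < a" "0 < b"
  shows "(\<Sum>t\<le>l. \<Sum>u\<le>m. Kfun a b (a*int u - b*int t) + (if 0 < t then Kfun a b (b*int t - a*int u) else 0))
    = (if b*int l < a*(int m+1) \<and> (m = 0 \<or> a*int m < b*(int l+1)) then 1 else 0)"
proof -
  have "(\<Sum>t\<le>l. \<Sum>u\<le>m. Kfun a b (a*int u - b*int t) + (if 0 < t then Kfun a b (b*int t - a*int u) else 0))
     = 1 - Hs (a*int m - b*(int l + 1)) - Hs (b * int l - a*(int m + 1))"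
    using inner_sum[OF assms] outer_sum[OF assms] by simp
  moreover have "\<not> (a*int m - b*(int l + 1) \<ge> 0 \<and> b * int l - a*(int m + 1) \<ge> 0)"
    using assms by (simp add: algebra_simps)
  moreover have "m = 0 \<Longrightarrow> a*int m - b*(int l + 1) < 0" using assms
    by (simp add: algebra_simps) (smt (verit) mult_nonneg_nonneg of_nat_0_le_iff)
  ultimately show ?thesis unfolding Hs_def by (auto simp: algebra_simps)
qed

lemma Gset_bound:
  assumes "0 < a" "0 < b" "(x, y) \<in> Gset a b"
  shows "1 \<le> x \<and> x \<le> b \<and> 1 \<le> y \<and> y \<le> a"
proof -
  have h: "1 \<le> x" "1 \<le> y" "a*b - a*x - b*y > 0" using assms(3) by (auto simp: Gset_def gval_def)
  have "b*y > 0" using h assms by simp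
  then have "a*x < a*b" using h by linarith
  then have "x < b" using assms by simp
  moreover have "a*x > 0" using h assms by simp
  then have "b*y < b*a" using h by (simp add: algebra_simps)
  then have "y < a" using assms by simp
  ultimately show ?thesis using h by simp
qed

lemma finite_Gset: "0 < a \<Longrightarrow> 0 < b \<Longrightarrow> finite (Gset a b)"
  by (rule finite_subset[of _ "{1..b} \<times> {1..a}"]) (auto dest: Gset_bound)

lemma sub_G: "subdiagram a b D \<Longrightarrow> D \<subseteq> Gset a b"
  unfolding subdiagram_def by (elim conjE)

lemma sub_closed: "subdiagram a b D \<Longrightarrow> (x, y) \<in> D \<Longrightarrow> (x', y') \<in> Gset a b \<Longrightarrow> x' \<le> x \<Longrightarrow> y' \<le> y \<Longrightarrow> (x', y') \<in> D"
  unfolding subdiagram_def by (elim conjE allE impE) 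

lemma sub_bound: "0 < a \<Longrightarrow> 0 < b \<Longrightarrow> subdiagram a b D \<Longrightarrow> (x, y) \<in> D \<Longrightarrow> 1 \<le> x \<and> x \<le> b \<and> 1 \<le> y \<and> y \<le> a"
  using sub_G Gset_bound by (metis subsetD)

lemma sub_finite: "0 < a \<Longrightarrow> 0 < b \<Longrightarrow> subdiagram a b D \<Longrightarrow> finite D"
  using finite_Gset sub_G by (metis finite_subset)

lemma down:
  assumes "0 < a" "0 < b" "subdiagram a b D" "(x, y) \<in> D" "1 \<le> x'" "1 \<le> y'" "x' \<le> x" "y' \<le> y"
  shows "(x', y') \<in> D"
proof -
  have G: "(x, y) \<in> Gset a b" using assms sub_G by blast
  have "a*x' \<le> a*x" "b*y' \<le> b*y" using assms by simp_all
  moreover have "b*y < a*b - a*x" using G by (simp add: Gset_def gval_def)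
  ultimately have "b*y' < a*b - a*x'" by linarith
  then have "(x', y') \<in> Gset a b" using assms by (simp add: Gset_def gval_def)
  then show ?thesis using assms sub_closed by blast
qed

lemma leg_iff:
  assumes "0 < a" "0 < b" "subdiagram a b D" "c \<in> D"
  shows "(fst c, snd c + int t) \<in> D \<longleftrightarrow> t \<le> leg D c"
proof -
  obtain x y where c: "c = (x, y)" by force
  define S where "S = {k::nat. (x, y + int k) \<in> D}"
  have "S \<subseteq> {..nat a}"
  proof
    fix k assume "k \<in> S"
    then have "(x, y + int k) \<in> Gset a b" using assms(3) S_def sub_G by blast
    then have "y + int k \<le> a" using Gset_bound[OF assms(1,2)] by blast
    moreover have "1 \<le> y" using assms c sub_bound by blast
    ultimately show "k \<in> {..nat a}" by simp
  qed
  then have fin: "finite S" using finite_subset by blast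
  have "0 \<in> S" using assms c S_def by simp
  then have M: "Max S \<in> S" using fin Max_in by blast
  have yy: "1 \<le> y" using assms c sub_bound by blast
  have l: "leg D c = Max S" by (simp add: leg_def S_def c)
  show ?thesis
  proof
    assume "(fst c, snd c + int t) \<in> D"
    then have "t \<in> S" by (simp add: S_def c)
    then show "t \<le> leg D c" using l fin by simp
  next
    assume "t \<le> leg D c"
    moreover have "(x, y + int (Max S)) \<in> D" using M S_def by simp
    moreover have "1 \<le> x" using assms c sub_bound by blast
    ultimately show "(fst c, snd c + int t) \<in> D"
      using down[OF assms(1,2,3), of x "y + int (Max S)" x "y + int t"] yy l c by simp
  qed
qed

lemma arm_iff:
  assumes "0 < a" "0 < b" "subdiagram a b D" "c \<in> D"
  shows "(fst c + int t, snd c) \<in> D \<longleftrightarrow> t \<le> arm D c"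
proof -
  obtain x y where c: "c = (x, y)" by force
  define S where "S = {k::nat. (x + int k, y) \<in> D}"
  have "S \<subseteq> {..nat b}"
  proof
    fix k assume "k \<in> S"
    then have "(x + int k, y) \<in> Gset a b" using assms(3) S_def sub_G by blast
    then have "x + int k \<le> b" using Gset_bound[OF assms(1,2)] by blast
    moreover have "1 \<le> x" using assms c sub_bound by blast
    ultimately show "k \<in> {..nat b}" by simp
  qed
  then have fin: "finite S" using finite_subset by blast
  have "0 \<in> S" using assms c S_def by simp
  then have M: "Max S \<in> S" using fin Max_in by blast
  have xx: "1 \<le> x" "1 \<le> y" using assms c sub_bound by blast+
  have l: "arm D c = Max S" by (simp add: arm_def S_def c)
  show ?thesis
  proof
    assume "(fst c + int t, snd c) \<in> D"
    then have "t \<in> S" by (simp add: S_def c)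
    then show "t \<le> arm D c" using l fin by simp
  next
    assume "t \<le> arm D c"
    moreover have "(x + int (Max S), y) \<in> D" using M S_def by simp
    ultimately show "(fst c + int t, snd c) \<in> D"
      using down[OF assms(1,2,3), of "x + int (Max S)" y "x + int t" y] xx l c by simp
  qed
qed

lemma pair_sum:
  assumes "0 < a" "0 < b" "subdiagram a b D"
  shows "(\<Sum>i\<in>D. \<Sum>j\<in>D. if fst j \<le> fst i \<and> snd i \<le> snd j then h i j else 0)
    = (\<Sum>c\<in>D. \<Sum>t\<le>leg D c. \<Sum>u\<le>arm D c. h (fst c + int u, snd c) (fst c, snd c + int t))"
proof -
  have fin: "finite D" using sub_finite assms by blast
  define P where "P = {p \<in> D \<times> D. fst (snd p) \<le> fst (fst p) \<and> snd (fst p) \<le> snd (snd p)}"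
  define S where "S = Sigma D (\<lambda>c. {..leg D c} \<times> {..arm D c})"
  define \<phi> where "\<phi> = (\<lambda>(c::cell, (t::nat, u::nat)). ((fst c + int u, snd c), (fst c, snd c + int t)))"
  define \<psi> where "\<psi> = (\<lambda>(i::cell, j::cell). ((fst j, snd i), (nat (snd j - snd i), nat (fst i - fst j))))"
  have L: "(\<Sum>i\<in>D. \<Sum>j\<in>D. if fst j \<le> fst i \<and> snd i \<le> snd j then h i j else 0) = (\<Sum>p\<in>P. h (fst p) (snd p))"
    unfolding P_def using fin
    by (simp add: sum.cartesian_product sum.inter_filter case_prod_beta)
  have R: "(\<Sum>c\<in>D. \<Sum>t\<le>leg D c. \<Sum>u\<le>arm D c. h (fst c + int u, snd c) (fst c, snd c + int t))
     = (\<Sum>q\<in>S. (\<lambda>p. h (fst p) (snd p)) (\<phi> q))"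
  proof -
    have "(\<Sum>c\<in>D. \<Sum>t\<le>leg D c. \<Sum>u\<le>arm D c. h (fst c + int u, snd c) (fst c, snd c + int t))
      = (\<Sum>c\<in>D. \<Sum>p\<in>{..leg D c} \<times> {..arm D c}. h (fst c + int (snd p), snd c) (fst c, snd c + int (fst p)))"
      by (rule sum.cong[OF refl]) (simp add: sum.cartesian_product case_prod_beta)
    also have "\<dots> = (\<Sum>q\<in>S. h (fst (fst q) + int (snd (snd q)), snd (fst q)) (fst (fst q), snd (fst q) + int (fst (snd q))))"
      unfolding S_def using fin by (subst sum.Sigma) (auto simp: case_prod_beta)
    finally show ?thesis by (simp add: \<phi>_def case_prod_beta)
  qed
  have bij: "bij_betw \<phi> S P"
  proof (rule bij_betw_byWitness[where f'=\<psi>])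
    show "\<forall>q\<in>S. \<psi> (\<phi> q) = q" unfolding \<psi>_def \<phi>_def S_def by auto
    show "\<forall>p\<in>P. \<phi> (\<psi> p) = p" unfolding \<psi>_def \<phi>_def P_def by auto
    show "\<phi> ` S \<subseteq> P"
    proof
      fix p assume "p \<in> \<phi> ` S"
      then obtain c t u where q: "c \<in> D" "t \<le> leg D c" "u \<le> arm D c" and p: "p = \<phi> (c, (t, u))"
        unfolding S_def by auto
      show "p \<in> P" using q p arm_iff[OF assms q(1)] leg_iff[OF assms q(1)]
        unfolding P_def \<phi>_def by auto
    qed
    show "\<psi> ` P \<subseteq> S"
    proof
      fix q assume "q \<in> \<psi> ` P"
      then obtain i j where p: "i \<in> D" "j \<in> D" "fst j \<le> fst i" "snd i \<le> snd j" and q: "q = \<psi> (i, j)"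
        unfolding P_def by auto
      have "1 \<le> fst j" "1 \<le> snd i" using p assms sub_bound
        by (metis prod.collapse)+
      then have c: "(fst j, snd i) \<in> D" using down[OF assms, of "fst i" "snd i" "fst j" "snd i"] p by simp
      have "nat (snd j - snd i) \<le> leg D (fst j, snd i)"
        using leg_iff[OF assms c, of "nat (snd j - snd i)"] p by simp
      moreover have "nat (fst i - fst j) \<le> arm D (fst j, snd i)"
        using arm_iff[OF assms c, of "nat (fst i - fst j)"] p by simp
      ultimately show "q \<in> S" using c q unfolding S_def \<psi>_def by simp
    qed
  qed
  show ?thesis using L R sum.reindex_bij_betw[OF bij, of "\<lambda>p. h (fst p) (snd p)"] by simp
qed

lemma ind_sum:
  fixes f :: "cell \<Rightarrow> real"
  assumes "finite G" "D \<subseteq> G"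
  shows "(\<Sum>j\<in>G. f j * indicator D j) = (\<Sum>j\<in>D. f j)"
proof -
  have "(\<Sum>j\<in>G. f j * indicator D j) = (\<Sum>j\<in>G. if j \<in> D then f j else 0)"
    by (rule sum.cong) (auto simp: indicator_def)
  also have "\<dots> = sum f (G \<inter> D)" using assms(1) by (simp add: sum.inter_restrict)
  also have "G \<inter> D = D" using assms(2) by blast
  finally show ?thesis .
qed

lemma Q_eq:
  assumes "0 < a" "0 < b" "subdiagram a b D"
  shows "Qform a b (indicator D) = real_of_int (\<Sum>i\<in>D. \<Sum>j\<in>D. Kfun a b (gval a b j - gval a b i))"
proof -
  have fG: "finite (Gset a b)" using finite_Gset assms by blast
  have DG: "D \<subseteq> Gset a b" using assms subdiagram_def by blast
  have "Qform a b (indicator D) = (\<Sum>i\<in>Gset a b. (\<Sum>j\<in>D. real_of_int (Kfun a b (gval a b j - gval a b i)) * indicator D i))"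
    unfolding Qform_def
  proof (rule sum.cong[OF refl])
    fix i
    show "(\<Sum>j\<in>Gset a b. real_of_int (Kfun a b (gval a b j - gval a b i)) * indicator D i * indicator D j)
      = (\<Sum>j\<in>D. real_of_int (Kfun a b (gval a b j - gval a b i)) * indicator D i)"
      using ind_sum[OF fG DG, of "\<lambda>j. real_of_int (Kfun a b (gval a b j - gval a b i)) * indicator D i"] by simp
  qed
  also have "\<dots> = (\<Sum>i\<in>Gset a b. (\<Sum>j\<in>D. real_of_int (Kfun a b (gval a b j - gval a b i))) * indicator D i)"
    by (simp add: sum_distrib_right)
  also have "\<dots> = (\<Sum>i\<in>D. (\<Sum>j\<in>D. real_of_int (Kfun a b (gval a b j - gval a b i))))"
    by (rule ind_sum[OF fG DG])
  finally show ?thesis by simp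
qed

lemma K_zero1:
  assumes "0 < a" "0 < b" "p \<le> -1" "q \<le> 0"
  shows "Kfun a b (a*p + b*q) = 0"
proof -
  have "a*p \<le> a*(-1)" using assms by (intro mult_left_mono) auto
  moreover have "b*q \<le> 0" using assms by (simp add: mult_nonneg_nonpos)
  ultimately have "a*p + b*q < 0" "a*p + b*q < a" "a*p + b*q < b" "a*p + b*q < a + b"
    using assms by linarith+
  then show ?thesis unfolding Kfun_def by simp
qed

lemma K_zero2:
  assumes "0 < a" "0 < b" "1 \<le> p" "1 \<le> q"
  shows "Kfun a b (a*p + b*q) = 0"
proof -
  have "a*1 \<le> a*p" using assms by (intro mult_left_mono) auto
  moreover have "b*1 \<le> b*q" using assms by (intro mult_left_mono) auto
  ultimately have "a*p + b*q \<ge> 0" "a*p + b*q \<ge> a" "a*p + b*q \<ge> b" "a*p + b*q \<ge> a + b"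
    using assms by linarith+
  then show ?thesis unfolding Kfun_def by simp
qed

lemma K_split:
  assumes "0 < a" "0 < b"
  shows "Kfun a b (gval a b j - gval a b i) =
     (if fst j \<le> fst i \<and> snd i \<le> snd j then Kfun a b (gval a b j - gval a b i) else 0)
   + (if fst i \<le> fst j \<and> snd j < snd i then Kfun a b (gval a b j - gval a b i) else 0)"
proof -
  have d: "gval a b j - gval a b i = a * (fst i - fst j) + b * (snd i - snd j)"
    by (simp add: gval_def algebra_simps)
  show ?thesis
  proof (cases "fst j \<le> fst i \<and> snd i \<le> snd j")
    case True then show ?thesis by auto
  next
    case F: False
    show ?thesis
    proof (cases "fst i \<le> fst j \<and> snd j < snd i")
      case True then show ?thesis using F by auto
    next
      case False
      then have "(fst i - fst j \<le> -1 \<and> snd i - snd j \<le> 0) \<or> (1 \<le> fst i - fst j \<and> 1 \<le> snd i - snd j)"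
        using F by auto
      then have "Kfun a b (gval a b j - gval a b i) = 0"
        unfolding d using K_zero1[OF assms] K_zero2[OF assms] by blast
      then show ?thesis by simp
    qed
  qed
qed

lemma sum_eq_Phi:
  assumes "0 < a" "0 < b" "subdiagram a b D"
  shows "(\<Sum>i\<in>D. \<Sum>j\<in>D. Kfun a b (gval a b j - gval a b i))
    = (\<Sum>c\<in>D. (\<Sum>t\<le>leg D c. \<Sum>u\<le>arm D c. Kfun a b (a*int u - b*int t) + (if 0 < t then Kfun a b (b*int t - a*int u) else 0)))"
proof -
  let ?K = "\<lambda>i j. Kfun a b (gval a b j - gval a b i)"
  have g1: "\<And>x y t u. gval a b (x, y + int t) - gval a b (x + int u, y) = a*int u - b*int t"
    by (simp add: gval_def algebra_simps)
  have g2: "\<And>x y t u. gval a b (x + int u, y) - gval a b (x, y + int t) = b*int t - a*int u"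
    by (simp add: gval_def algebra_simps)
  have e1: "\<And>c t u. Kfun a b (gval a b (fst c, snd c + int t) - gval a b (fst c + int u, snd c)) = Kfun a b (a*int u - b*int t)"
    by (simp add: gval_def algebra_simps)
  have e2: "\<And>c t u. (if snd c < snd c + int t then Kfun a b (gval a b (fst c + int u, snd c) - gval a b (fst c, snd c + int t)) else 0) = (if 0 < t then Kfun a b (b*int t - a*int u) else 0)"
    by (simp add: gval_def algebra_simps)
  have "(\<Sum>i\<in>D. \<Sum>j\<in>D. ?K i j) = (\<Sum>i\<in>D. \<Sum>j\<in>D.
     (if fst j \<le> fst i \<and> snd i \<le> snd j then ?K i j else 0)
   + (if fst i \<le> fst j \<and> snd j < snd i then ?K i j else 0))"
    by (subst K_split[OF assms(1,2)]) simp
  also have "\<dots> = (\<Sum>i\<in>D. \<Sum>j\<in>D. (if fst j \<le> fst i \<and> snd i \<le> snd j then ?K i j else 0))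
     + (\<Sum>i\<in>D. \<Sum>j\<in>D. (if fst i \<le> fst j \<and> snd j < snd i then ?K i j else 0))"
    by (simp add: sum.distrib)
  also have "(\<Sum>i\<in>D. \<Sum>j\<in>D. (if fst i \<le> fst j \<and> snd j < snd i then ?K i j else 0))
     = (\<Sum>p\<in>D. \<Sum>q\<in>D. (if fst q \<le> fst p \<and> snd p \<le> snd q then (if snd p < snd q then ?K q p else 0) else 0))"
    by (subst sum.swap) (auto intro!: sum.cong)
  also have "(\<Sum>i\<in>D. \<Sum>j\<in>D. (if fst j \<le> fst i \<and> snd i \<le> snd j then ?K i j else 0))
     = (\<Sum>c\<in>D. \<Sum>t\<le>leg D c. \<Sum>u\<le>arm D c. ?K (fst c + int u, snd c) (fst c, snd c + int t))"
    by (rule pair_sum[OF assms])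
  also have "(\<Sum>p\<in>D. \<Sum>q\<in>D. (if fst q \<le> fst p \<and> snd p \<le> snd q then (if snd p < snd q then ?K q p else 0) else 0))
     = (\<Sum>c\<in>D. \<Sum>t\<le>leg D c. \<Sum>u\<le>arm D c. (if snd c < snd c + int t then ?K (fst c, snd c + int t) (fst c + int u, snd c) else 0))"
    using pair_sum[OF assms, of "\<lambda>p q. if snd p < snd q then Kfun a b (gval a b p - gval a b q) else 0"] by simp
  finally show ?thesis
    by (simp only: e1 e2 sum.distrib[symmetric])
qed

lemma real_cond:
  fixes a b :: int and l m :: nat
  assumes "0 < a" "0 < b"
  shows "(real l / real (m + 1) < real_of_int a / real_of_int b \<and>
      (m = 0 \<or> real_of_int a / real_of_int b < real (l + 1) / real m))
    \<longleftrightarrow> (b*int l < a*(int m+1) \<and> (m = 0 \<or> a*int m < b*(int l+1)))"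
proof -
  have bpos: "real_of_int b > 0" using assms by simp
  have "real l / real (m + 1) < real_of_int a / real_of_int b \<longleftrightarrow> real_of_int (b*int l) < real_of_int (a*(int m+1))"
    using bpos by (simp add: field_simps)
  also have "\<dots> \<longleftrightarrow> b*int l < a*(int m+1)" by (rule of_int_less_iff)
  finally have 1: "real l / real (m + 1) < real_of_int a / real_of_int b \<longleftrightarrow> b*int l < a*(int m+1)" .
  have 2: "real_of_int a / real_of_int b < real (l + 1) / real m \<longleftrightarrow> a*int m < b*(int l+1)" if "m > 0"
  proof -
    have mpos: "real m > 0" using that by simp
    have "real_of_int a / real_of_int b < real (l + 1) / real m \<longleftrightarrow> real_of_int (a*int m) < real_of_int (b*(int l+1))"
      using bpos mpos by (simp add: field_simps)
    also have "\<dots> \<longleftrightarrow> a*int m < b*(int l+1)" by (rule of_int_less_iff)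
    finally show ?thesis .
  qed
  show ?thesis using 1 2 by auto
qed

theorem theorem1p1:
  fixes a b :: int and D :: "cell set"
  assumes "1 < a" and "a < b" and "coprime a b"
    and "subdiagram a b D"
  shows "Qform a b (indicator D) = real (dinv a b D) \<and>
         (D \<noteq> {} \<longrightarrow> Qform a b (indicator D) > 0)"
proof -
  have a0: "0 < a" and b0: "0 < b" using assms by auto
  note sd = assms(4)
  have fin: "finite D" using sub_finite[OF a0 b0 sd] .
  define cond where "cond = (\<lambda>c. b*int (leg D c) < a*(int (arm D c)+1) \<and> (arm D c = 0 \<or> a*int (arm D c) < b*(int (leg D c)+1)))"
  have "Qform a b (indicator D) = real_of_int (\<Sum>c\<in>D. (if cond c then 1 else 0))"
    unfolding Q_eq[OF a0 b0 sd] sum_eq_Phi[OF a0 b0 sd] Phi[OF a0 b0] cond_def ..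
  also have "(\<Sum>c\<in>D. (if cond c then 1 else 0)) = int (card {c\<in>D. cond c})"
    using fin by (simp add: sum.inter_filter[symmetric])
  also have "{c\<in>D. cond c} = {c \<in> D.
      real (leg D c) / real (arm D c + 1) < real_of_int a / real_of_int b \<and>
      (arm D c = 0 \<or> real_of_int a / real_of_int b < real (leg D c + 1) / real (arm D c))}"
    unfolding cond_def using real_cond[OF a0 b0] by blast
  finally have Q: "Qform a b (indicator D) = real (dinv a b D)" unfolding dinv_def by simp
  moreover have "D \<noteq> {} \<longrightarrow> Qform a b (indicator D) > 0"
  proof
    assume ne: "D \<noteq> {}"
    let ?f = "\<lambda>d::cell. fst d + snd d"
    have fi: "finite (?f ` D)" "?f ` D \<noteq> {}" using fin ne by auto
    then have "Max (?f ` D) \<in> ?f ` D" by (rule Max_in)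
    then obtain c where c: "c \<in> D" and cm: "?f c = Max (?f ` D)" by force
    have mx: "\<forall>d\<in>D. fst d + snd d \<le> fst c + snd c"
      using cm fi(1) by (metis (no_types, lifting) Max_ge image_eqI)
    have "arm D c = 0"
    proof (rule ccontr)
      assume "arm D c \<noteq> 0"
      then have "(fst c + int 1, snd c) \<in> D" using arm_iff[OF a0 b0 sd c, of 1] by simp
      then show False using mx by force
    qed
    moreover have "leg D c = 0"
    proof (rule ccontr)
      assume "leg D c \<noteq> 0"
      then have "(fst c, snd c + int 1) \<in> D" using leg_iff[OF a0 b0 sd c, of 1] by simp
      then show False using mx by force
    qed
    ultimately have "cond c" unfolding cond_def using a0 by simp
    then have "c \<in> {c\<in>D. cond c}" using c by simp
    moreover have "finite {c\<in>D. cond c}" using fin by simp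
    ultimately have "card {c\<in>D. cond c} > 0" using card_gt_0_iff by blast
    moreover have "{c\<in>D. cond c} = {c \<in> D.
      real (leg D c) / real (arm D c + 1) < real_of_int a / real_of_int b \<and>
      (arm D c = 0 \<or> real_of_int a / real_of_int b < real (leg D c + 1) / real (arm D c))}"
      unfolding cond_def using real_cond[OF a0 b0] by blast
    ultimately have "dinv a b D > 0" unfolding dinv_def by simp
    then show "Qform a b (indicator D) > 0" using Q by simp
  qed
  ultimately show ?thesis by blast
qed

end
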